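(* Let $k\in\mathbb{N}$ and let $F\colon S_{\ell_\infty^k}\to S^+_{\ell_1^k}$ be any map. Then the map $G\colon S_{\ell_\infty^k}\to S^+_{\ell_1^k}$ given by \[G=\frac1{k!}\sum_{\pi\in\mathrm{Per}_k}P_{\pi^{-1}}\circ F\circ P_\pi\] is well defined, equivariant with respect to basis permutations, and satisfies $\omega_G\le\omega_F$. Furthermore, if $F$ is support preserving, then so is $G$.
   Context: $S_{\ell_\infty^k}$ is the unit sphere of $(\mathbb{R}^k,\|\cdot\|_\infty)$; $S^+_{\ell_1^k}=\{x\in\mathbb{R}^k:\|x\|_1=1, x_i\ge0\ \forall i\}$. $\mathrm{Per}_k$ is the group of permutations of $\{1,\dots,k\}$; $P_\pi(x_j)_{j=1}^k=(x_{\pi(j)})_{j=1}^k$. Equivariant with respect to basis permutations: $G(P_\pi x)=P_\pi G(x)$ for all $x,\pi$. $\omega_F(t)=\sup\{\|F(x)-F(y)\|_1:\|x-y\|_\infty\le t\}$. Support preserving: $\mathrm{supp}(F(x))=\mathrm{supp}(x)$ for all $x$, where $\mathrm{supp}(x)=\{i:x_i\neq0\}$. *)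

theory Defs
  imports "HOL-Analysis.Analysis" "HOL-Combinatorics.Permutations"
begin

text \<open>Vectors in R^k are modelled as real^'k with a finite index type 'k, k = CARD('k).\<close>

definition linf_norm :: "real^'k \<Rightarrow> real" where
  "linf_norm x = Max (range (\<lambda>i. \<bar>x $ i\<bar>))"

definition l1_norm :: "real^'k \<Rightarrow> real" where
  "l1_norm x = (\<Sum>i\<in>UNIV. \<bar>x $ i\<bar>)"

definition sphere_linf :: "(real^'k) set" where
  "sphere_linf = {x. linf_norm x = 1}"

definition pos_sphere_l1 :: "(real^'k) set" where
  "pos_sphere_l1 = {x. l1_norm x = 1 \<and> (\<forall>i. x $ i \<ge> 0)}"

definition Pperm :: "('k \<Rightarrow> 'k) \<Rightarrow> real^'k \<Rightarrow> real^'k" where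
  "Pperm \<pi> x = (\<chi> j. x $ \<pi> j)"

definition symmetrize :: "(real^'k \<Rightarrow> real^'k) \<Rightarrow> real^'k \<Rightarrow> real^'k" where
  "symmetrize F x = (1 / fact CARD('k)) *\<^sub>R
     (\<Sum>\<pi>\<in>{\<pi>. \<pi> permutes (UNIV::'k set)}. Pperm (inv \<pi>) (F (Pperm \<pi> x)))"

definition modulus :: "(real^'k \<Rightarrow> real^'k) \<Rightarrow> real \<Rightarrow> ereal" where
  "modulus F t = Sup {ereal (l1_norm (F x - F y)) | x y.
      x \<in> sphere_linf \<and> y \<in> sphere_linf \<and> linf_norm (x - y) \<le> t}"

definition supp :: "real^'k \<Rightarrow> 'k set" where
  "supp x = {i. x $ i \<noteq> 0}"

end

theory Submission
  imports Defs
begin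

lemma Pperm_comp: "Pperm a (Pperm b x) = Pperm (b \<circ> a) x"
  by (simp add: Pperm_def vec_eq_iff)

lemma Pperm_id: "Pperm id x = x"
  by (simp add: Pperm_def vec_eq_iff)

lemma Pperm_sum: "Pperm p (sum f S) = (\<Sum>a\<in>S. Pperm p (f a))"
  by (simp add: Pperm_def vec_eq_iff)

lemma Pperm_scaleR: "Pperm p (c *\<^sub>R x) = c *\<^sub>R Pperm p x"
  by (simp add: Pperm_def vec_eq_iff)

lemma Pperm_diff: "Pperm p (x - y) = Pperm p x - Pperm p y"
  by (simp add: Pperm_def vec_eq_iff)

lemma linf_Pperm:
  assumes "p permutes (UNIV::'k set)"
  shows "linf_norm (Pperm p (x::real^'k)) = linf_norm x"
proof -
  have "range (\<lambda>i. \<bar>Pperm p x $ i\<bar>) = (\<lambda>i. \<bar>x $ i\<bar>) ` range p"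
    by (auto simp: Pperm_def)
  also have "range p = UNIV" using permutes_surj[OF assms] by simp
  finally show ?thesis by (simp add: linf_norm_def)
qed

lemma l1_Pperm:
  assumes "p permutes (UNIV::'k set)"
  shows "l1_norm (Pperm p (x::real^'k)) = l1_norm x"
  unfolding l1_norm_def Pperm_def
  using sum.permute[OF assms, of "\<lambda>i. \<bar>x $ i\<bar>"] by (simp add: o_def)

lemma sphere_Pperm:
  assumes "p permutes (UNIV::'k set)" "x \<in> sphere_linf"
  shows "Pperm p (x::real^'k) \<in> sphere_linf"
  using assms linf_Pperm[OF assms(1)] by (simp add: sphere_linf_def)

lemma pos_Pperm:
  assumes "p permutes (UNIV::'k set)" "x \<in> pos_sphere_l1"
  shows "Pperm p (x::real^'k) \<in> pos_sphere_l1"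
  using assms l1_Pperm[OF assms(1), of x] by (simp add: pos_sphere_l1_def Pperm_def)

lemma card_perms: "card {\<pi>. \<pi> permutes (UNIV::'k::finite set)} = fact CARD('k)"
  by (rule card_permutations) auto

lemma l1_sum_nonneg:
  assumes "finite S" "\<forall>a\<in>S. \<forall>i. (f a :: real^'k) $ i \<ge> 0"
  shows "l1_norm (sum f S) = (\<Sum>a\<in>S. l1_norm (f a))"
proof -
  have "l1_norm (sum f S) = (\<Sum>i\<in>UNIV. \<Sum>a\<in>S. f a $ i)"
    unfolding l1_norm_def using assms by (auto intro!: sum.cong abs_of_nonneg sum_nonneg)
  also have "\<dots> = (\<Sum>a\<in>S. \<Sum>i\<in>UNIV. f a $ i)" by (rule sum.swap)
  also have "\<dots> = (\<Sum>a\<in>S. l1_norm (f a))"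
    unfolding l1_norm_def using assms by (auto intro!: sum.cong)
  finally show ?thesis .
qed

lemma l1_triangle: "l1_norm (x + y) \<le> l1_norm x + l1_norm (y::real^'k)"
  unfolding l1_norm_def by (simp add: sum.distrib[symmetric] sum_mono abs_triangle_ineq)

lemma l1_sum_le: "finite S \<Longrightarrow> l1_norm (sum (f::_\<Rightarrow>real^'k) S) \<le> (\<Sum>a\<in>S. l1_norm (f a))"
proof (induction S rule: finite_induct)
  case empty then show ?case by (simp add: l1_norm_def)
next
  case (insert a S)
  then show ?case using l1_triangle[of "f a" "sum f S"] by simp
qed

lemma l1_scaleR: "l1_norm (c *\<^sub>R (x::real^'k)) = \<bar>c\<bar> * l1_norm x"
  unfolding l1_norm_def by (simp add: abs_mult sum_distrib_left)

lemma symm_comp: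
  "symmetrize F (x::real^'k::finite) $ i = (1 / fact CARD('k)) *
     (\<Sum>\<pi>\<in>{\<pi>. \<pi> permutes (UNIV::'k set)}. F (Pperm \<pi> x) $ (inv \<pi> i))"
  by (simp add: symmetrize_def Pperm_def)

theorem lemma4p3:
  fixes F :: "real^'k \<Rightarrow> real^'k"
  assumes F_maps: "\<forall>x\<in>sphere_linf. F x \<in> pos_sphere_l1"
  shows "(\<forall>x\<in>sphere_linf. symmetrize F x \<in> pos_sphere_l1)
     \<and> (\<forall>x\<in>sphere_linf. \<forall>\<pi>. \<pi> permutes (UNIV::'k set) \<longrightarrow>
            symmetrize F (Pperm \<pi> x) = Pperm \<pi> (symmetrize F x))
     \<and> (\<forall>t. modulus (symmetrize F) t \<le> modulus F t)
     \<and> ((\<forall>x\<in>sphere_linf. supp (F x) = supp x) \<longrightarrow>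
          (\<forall>x\<in>sphere_linf. supp (symmetrize F x) = supp x))"
proof (intro conjI)
  let ?P = "{\<pi>. \<pi> permutes (UNIV::'k set)}"
  have finP: "finite ?P" by (rule finite_permutations) simp
  have kpos: "(fact CARD('k) :: real) > 0" by simp
  have cardP: "real (card ?P) = fact CARD('k)" by (simp add: card_perms)
  have Fx: "F (Pperm \<pi> x) \<in> pos_sphere_l1" if "x \<in> sphere_linf" "\<pi> \<in> ?P" for x \<pi>
    using F_maps sphere_Pperm that by auto
  show "\<forall>x\<in>sphere_linf. symmetrize F x \<in> pos_sphere_l1"
  proof
    fix x :: "real^'k" assume x: "x \<in> sphere_linf"
    have mem: "Pperm (inv \<pi>) (F (Pperm \<pi> x)) \<in> pos_sphere_l1" if "\<pi> \<in> ?P" for \<pi>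
      using pos_Pperm[OF permutes_inv Fx[OF x that]] that by auto
    have nn: "\<forall>a\<in>?P. \<forall>i. Pperm (inv a) (F (Pperm a x)) $ i \<ge> 0"
      using mem by (auto simp: pos_sphere_l1_def)
    have "l1_norm (\<Sum>\<pi>\<in>?P. Pperm (inv \<pi>) (F (Pperm \<pi> x))) = (\<Sum>\<pi>\<in>?P. 1)"
      using l1_sum_nonneg[OF finP nn] mem by (auto simp: pos_sphere_l1_def)
    then have "l1_norm (symmetrize F x) = 1"
      unfolding symmetrize_def l1_scaleR using cardP kpos by simp
    moreover have "\<forall>i. symmetrize F x $ i \<ge> 0"
      using nn by (auto simp: symmetrize_def intro!: sum_nonneg divide_nonneg_nonneg)
    ultimately show "symmetrize F x \<in> pos_sphere_l1" by (simp add: pos_sphere_l1_def)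
  qed
  show "\<forall>x\<in>sphere_linf. \<forall>\<sigma>. \<sigma> permutes (UNIV::'k set) \<longrightarrow>
            symmetrize F (Pperm \<sigma> x) = Pperm \<sigma> (symmetrize F x)"
  proof (intro ballI allI impI)
    fix x :: "real^'k" and \<sigma> assume s: "\<sigma> permutes (UNIV::'k set)"
    have "(\<Sum>\<pi>\<in>?P. Pperm (inv \<pi>) (F (Pperm \<pi> (Pperm \<sigma> x))))
        = (\<Sum>\<pi>\<in>?P. Pperm (inv (inv \<sigma> \<circ> \<pi>)) (F (Pperm (\<sigma> \<circ> (inv \<sigma> \<circ> \<pi>)) x)))"
      using setum_permutations_compose_left[OF permutes_inv[OF s],
          of "\<lambda>\<pi>. Pperm (inv \<pi>) (F (Pperm (\<sigma> \<circ> \<pi>) x))"]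
      by (simp add: Pperm_comp)
    also have "\<dots> = (\<Sum>\<pi>\<in>?P. Pperm \<sigma> (Pperm (inv \<pi>) (F (Pperm \<pi> x))))"
    proof (rule sum.cong[OF refl])
      fix \<pi> assume p: "\<pi> \<in> ?P"
      have "\<sigma> \<circ> (inv \<sigma> \<circ> \<pi>) = \<pi>"
        by (simp add: fun_eq_iff permutes_inverses[OF s])
      moreover have "inv (inv \<sigma> \<circ> \<pi>) = inv \<pi> \<circ> \<sigma>"
        proof -
        have bs: "bij \<sigma>" "bij \<pi>" using p s permutes_bij by auto
        have "bij (inv \<sigma>)" using bs bij_imp_bij_inv by blast
        then have "inv (inv \<sigma> \<circ> \<pi>) = inv \<pi> \<circ> inv (inv \<sigma>)"
          using bs o_inv_distrib by blast
        then show ?thesis using inv_inv_eq[OF bs(1)] by simp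
      qed
      ultimately show "Pperm (inv (inv \<sigma> \<circ> \<pi>)) (F (Pperm (\<sigma> \<circ> (inv \<sigma> \<circ> \<pi>)) x))
          = Pperm \<sigma> (Pperm (inv \<pi>) (F (Pperm \<pi> x)))"
        by (simp add: Pperm_comp)
    qed
    finally show "symmetrize F (Pperm \<sigma> x) = Pperm \<sigma> (symmetrize F x)"
      unfolding symmetrize_def by (simp add: Pperm_scaleR Pperm_sum)
  qed
  show "\<forall>t. modulus (symmetrize F) t \<le> modulus F t"
  proof
    fix t
    let ?M = "modulus F t"
    show "modulus (symmetrize F) t \<le> ?M"
      unfolding modulus_def[of "symmetrize F"]
    proof (rule Sup_least, clarify)
      fix x y :: "real^'k"
      assume x: "x \<in> sphere_linf" and y: "y \<in> sphere_linf" and d: "linf_norm (x - y) \<le> t"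
      have each: "ereal (l1_norm (F (Pperm \<pi> x) - F (Pperm \<pi> y))) \<le> ?M" if p: "\<pi> \<in> ?P" for \<pi>
        unfolding modulus_def
      proof (rule Sup_upper, intro CollectI exI conjI)
        show "Pperm \<pi> x \<in> sphere_linf" "Pperm \<pi> y \<in> sphere_linf"
          using sphere_Pperm p x y by auto
        show "linf_norm (Pperm \<pi> x - Pperm \<pi> y) \<le> t"
          using d linf_Pperm[of \<pi> "x - y"] p by (simp add: Pperm_diff[symmetric])
      qed simp
      have idP: "id \<in> ?P" by (simp add: permutes_id)
      show "ereal (l1_norm (symmetrize F x - symmetrize F y)) \<le> ?M"
      proof (cases ?M)
        case PInf then show ?thesis by simp
      next
        case MInf then show ?thesis using each[OF idP] by simp
      next
        case (real m)
        have le: "l1_norm (F (Pperm \<pi> x) - F (Pperm \<pi> y)) \<le> m" if "\<pi> \<in> ?P" for \<pi>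
          using each[OF that] real by simp
        have "symmetrize F x - symmetrize F y = (1 / fact CARD('k)) *\<^sub>R
            (\<Sum>\<pi>\<in>?P. Pperm (inv \<pi>) (F (Pperm \<pi> x) - F (Pperm \<pi> y)))"
          unfolding symmetrize_def
          by (simp add: scaleR_right_diff_distrib[symmetric] sum_subtractf Pperm_diff)
        then have "l1_norm (symmetrize F x - symmetrize F y) =
            (1 / fact CARD('k)) * l1_norm (\<Sum>\<pi>\<in>?P. Pperm (inv \<pi>) (F (Pperm \<pi> x) - F (Pperm \<pi> y)))"
          by (simp add: l1_scaleR)
        also have "\<dots> \<le> (1 / fact CARD('k)) * (\<Sum>\<pi>\<in>?P. l1_norm (F (Pperm \<pi> x) - F (Pperm \<pi> y)))"
        proof (rule mult_left_mono)
          have "l1_norm (\<Sum>\<pi>\<in>?P. Pperm (inv \<pi>) (F (Pperm \<pi> x) - F (Pperm \<pi> y)))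
              \<le> (\<Sum>\<pi>\<in>?P. l1_norm (Pperm (inv \<pi>) (F (Pperm \<pi> x) - F (Pperm \<pi> y))))"
            by (rule l1_sum_le[OF finP])
          also have "\<dots> = (\<Sum>\<pi>\<in>?P. l1_norm (F (Pperm \<pi> x) - F (Pperm \<pi> y)))"
            by (rule sum.cong[OF refl]) (simp add: l1_Pperm permutes_inv)
          finally show "l1_norm (\<Sum>\<pi>\<in>?P. Pperm (inv \<pi>) (F (Pperm \<pi> x) - F (Pperm \<pi> y)))
              \<le> (\<Sum>\<pi>\<in>?P. l1_norm (F (Pperm \<pi> x) - F (Pperm \<pi> y)))" .
        qed simp
        also have "\<dots> \<le> (1 / fact CARD('k)) * (\<Sum>\<pi>\<in>?P. m)"
          by (rule mult_left_mono[OF sum_mono]) (use le in auto)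
        also have "\<dots> = m" using cardP kpos by simp
        finally show ?thesis using real by simp
      qed
    qed
  qed
  show "(\<forall>x\<in>sphere_linf. supp (F x) = supp x) \<longrightarrow>
          (\<forall>x\<in>sphere_linf. supp (symmetrize F x) = supp x)"
  proof (intro impI ballI)
    fix x :: "real^'k" assume S: "\<forall>x\<in>sphere_linf. supp (F x) = supp x" and x: "x \<in> sphere_linf"
    have key: "F (Pperm \<pi> x) $ (inv \<pi> i) = 0 \<longleftrightarrow> x $ i = 0" if p: "\<pi> \<in> ?P" for \<pi> i
    proof -
      have "supp (F (Pperm \<pi> x)) = supp (Pperm \<pi> x)" using S sphere_Pperm p x by auto
      then have "F (Pperm \<pi> x) $ (inv \<pi> i) = 0 \<longleftrightarrow> Pperm \<pi> x $ (inv \<pi> i) = 0"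
        by (auto simp: supp_def set_eq_iff)
      then show ?thesis using p by (simp add: Pperm_def permutes_inverses)
    qed
    have nn: "F (Pperm \<pi> x) $ j \<ge> 0" if "\<pi> \<in> ?P" for \<pi> j
      using Fx[OF x that] by (simp add: pos_sphere_l1_def)
    show "supp (symmetrize F x) = supp x"
    proof (rule set_eqI)
      fix i
      show "i \<in> supp (symmetrize F x) \<longleftrightarrow> i \<in> supp x"
      proof (cases "x $ i = 0")
        case True
        then have "symmetrize F x $ i = 0" using key[of _ i] by (simp add: symm_comp)
        then show ?thesis using True by (simp add: supp_def)
      next
        case False
        have "(\<Sum>\<pi>\<in>?P. F (Pperm \<pi> x) $ (inv \<pi> i)) > 0"
        proof (rule sum_pos2[OF finP, of id])
          show "id \<in> ?P" by (simp add: permutes_id)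
          show "0 < F (Pperm id x) $ (inv id i)"
            using key[of id i] False nn[of id] by (simp add: permutes_id less_le)
          show "\<And>\<pi>. \<pi> \<in> ?P \<Longrightarrow> 0 \<le> F (Pperm \<pi> x) $ (inv \<pi> i)" using nn by simp
        qed
        then have "symmetrize F x $ i \<noteq> 0" using kpos by (simp add: symm_comp)
        then show ?thesis using False by (simp add: supp_def)
      qed
    qed
  qed
qed

end
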